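(* Consider a qutrit ($\mathbb{C}^3$) with coupling operators the eight Gell-Mann matrices $\sigma^s_{01},\sigma^s_{02},\sigma^s_{12},\sigma^a_{01},\sigma^a_{02},\sigma^a_{12},\sigma^d_1,\sigma^d_2$ and vanishing Hamiltonian. Then the quantum filtering equation in projective coordinates $W=(1,w_1,w_2)$, \[ dw_k=\frac12\sum_j[w_k(L_j^*L_jW)_0-(L_j^*L_jW)_k]\,dt+\sum_j[w_k(L_jW)_0^2-(L_jW)_0(L_jW)_k]\,dt+\sum_j[(L_jW)_k-w_k(L_jW)_0]\,dY^j_t,\quad k=1,2, \] (with $j$ running over the eight Gell-Mann matrices $L_j$ and $Y=(Y^j)$ an eight-dimensional process indexed correspondingly as $Y^{01,s},Y^{02,s},Y^{12,s},Y^{01,a},Y^{02,a},Y^{12,a},Y^{1,d},Y^{2,d}$) takes the form \[ \begin{aligned} dw_1&=(1-w_1^2)\,dY^{01,s}_t-w_1w_2\,dY^{02,s}_t+w_2\,dY^{12,s}_t+i(1+w_1^2)\,dY^{01,a}_t+iw_1w_2\,dY^{02,a}_t-iw_2\,dY^{12,a}_t-2w_1\,dY^{1,d}_t,\\ dw_2&=-w_1w_2\,dY^{01,s}_t+(1-w_2^2)\,dY^{02,s}_t+w_1\,dY^{12,s}_t+iw_1w_2\,dY^{01,a}_t+i(1+w_2^2)\,dY^{02,a}_t+iw_1\,dY^{12,a}_t-w_2\,dY^{1,d}_t-\sqrt3\,w_2\,dY^{2,d}_t, \end{aligned} \] with all $dt$-terms vanishing. Moreover, the equation has exactly the same form when rewritten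 in terms of the innovation process $B$ defined by $dB^{jk,s}_t=dY^{jk,s}_t-2\langle\sigma^s_{jk}\rangle_W\,dt$, $dB^{jk,a}_t=dY^{jk,a}_t-2\langle\sigma^a_{jk}\rangle_W\,dt$, $dB^{k,d}_t=dY^{k,d}_t-2\langle\sigma^d_k\rangle_W\,dt$. Finally, when $Y$ is a standard eight-dimensional Wiener process, the diffusion operator $D$ of this system equals $2\Delta_{pro}$, where \[ \Delta_{pro}S=(1+|w_1|^2+|w_2|^2)\Big[(1+|w_1|^2)\frac{\partial^2S}{\partial w_1\partial\bar w_1}+(1+|w_2|^2)\frac{\partial^2S}{\partial w_2\partial\bar w_2}+w_1\bar w_2\frac{\partial^2S}{\partial w_1\partial\bar w_2}+\bar w_1w_2\frac{\partial^2S}{\partial\bar w_1\partial w_2}\Big] \] is the second order part of the Laplace–Beltrami operator on the complex projective space $P\mathbb{C}^2$.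
   Context: Indices of vectors in $\mathbb{C}^3$ run over $0,1,2$; $(v)_k$ is the $k$-th coordinate. The Gell-Mann matrices: $\sigma^s_{jk}$ ($0\le j<k\le2$) has entries $1$ at positions $(j,k)$ and $(k,j)$ and $0$ elsewhere; $\sigma^a_{jk}$ ($0\le j<k\le 2$) has $-i$ at $(j,k)$, $i$ at $(k,j)$ and $0$ elsewhere; $\sigma^d_1=\mathrm{diag}(1,-1,0)$, $\sigma^d_2=\frac1{\sqrt3}\mathrm{diag}(1,1,-2)$. For a matrix $A$, $\langle A\rangle_W=(W,AW)/(W,W)$ with the standard Hermitian inner product. The projective coordinates are $w_k=\chi_k/\chi_0$ for a state vector $\chi\in\mathbb{C}^3$. *)

theory Defs
  imports "HOL-Analysis.Analysis"
begin

text \<open>3x3 complex matrices and vectors in C^3 are represented as functions on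
  indices 0,1,2 (only indices below 3 are meaningful).\<close>

type_synonym cmat3 = "nat \<Rightarrow> nat \<Rightarrow> complex"
type_synonym cvec3 = "nat \<Rightarrow> complex"

definition mvec :: "cmat3 \<Rightarrow> cvec3 \<Rightarrow> cvec3" where
  "mvec A v = (\<lambda>k. \<Sum>m<3. A k m * v m)"

definition madj :: "cmat3 \<Rightarrow> cmat3" where
  "madj A = (\<lambda>a b. cnj (A b a))"

definition mmul :: "cmat3 \<Rightarrow> cmat3 \<Rightarrow> cmat3" where
  "mmul A B = (\<lambda>a b. \<Sum>m<3. A a m * B m b)"

definition cinner3 :: "cvec3 \<Rightarrow> cvec3 \<Rightarrow> complex" where
  "cinner3 u v = (\<Sum>m<3. cnj (u m) * v m)"

definition expect :: "cmat3 \<Rightarrow> cvec3 \<Rightarrow> complex" where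
  "expect A W = cinner3 W (mvec A W) / cinner3 W W"

definition gm_s :: "nat \<Rightarrow> nat \<Rightarrow> cmat3" where
  "gm_s j k = (\<lambda>a b. if (a = j \<and> b = k) \<or> (a = k \<and> b = j) then 1 else 0)"

definition gm_a :: "nat \<Rightarrow> nat \<Rightarrow> cmat3" where
  "gm_a j k = (\<lambda>a b. if a = j \<and> b = k then - \<i> else if a = k \<and> b = j then \<i> else 0)"

definition gm_d1 :: cmat3 where
  "gm_d1 = (\<lambda>a b. if a = b then (if a = 0 then 1 else if a = 1 then -1 else 0) else 0)"

definition gm_d2 :: cmat3 where
  "gm_d2 = (\<lambda>a b. if a = b then (if a = 2 then -2 / complex_of_real (sqrt 3)
                                   else 1 / complex_of_real (sqrt 3)) else 0)"

text \<open>The eight coupling operators L_0..L_7 in the order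
  s01, s02, s12, a01, a02, a12, d1, d2 (matching Y^{01,s},...,Y^{2,d}).\<close>
definition gm :: "nat \<Rightarrow> cmat3" where
  "gm j = [gm_s 0 1, gm_s 0 2, gm_s 1 2, gm_a 0 1, gm_a 0 2, gm_a 1 2, gm_d1, gm_d2] ! j"

definition Wv :: "complex \<Rightarrow> complex \<Rightarrow> cvec3" where
  "Wv w1 w2 = (\<lambda>m. if m = 0 then 1 else if m = 1 then w1 else w2)"

definition qf_drift :: "complex \<Rightarrow> complex \<Rightarrow> nat \<Rightarrow> complex" where
  "qf_drift w1 w2 k =
     (let W = Wv w1 w2 in
      (1/2) * (\<Sum>j<8. W k * mvec (mmul (madj (gm j)) (gm j)) W 0
                      - mvec (mmul (madj (gm j)) (gm j)) W k)
      + (\<Sum>j<8. W k * (mvec (gm j) W 0)^2 - mvec (gm j) W 0 * mvec (gm j) W k))"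

definition qf_diff :: "complex \<Rightarrow> complex \<Rightarrow> nat \<Rightarrow> nat \<Rightarrow> complex" where
  "qf_diff w1 w2 k j =
     (let W = Wv w1 w2 in mvec (gm j) W k - W k * mvec (gm j) W 0)"

text \<open>dt-coefficient of dw_k after substituting dY^j = dB^j + 2 <L_j>_W dt\<close>
definition qf_innov_drift :: "complex \<Rightarrow> complex \<Rightarrow> nat \<Rightarrow> complex" where
  "qf_innov_drift w1 w2 k =
     qf_drift w1 w2 k + (\<Sum>j<8. qf_diff w1 w2 k j * (2 * expect (gm j) (Wv w1 w2)))"

definition pd :: "(complex \<times> complex \<Rightarrow> complex) \<Rightarrow> complex \<times> complex \<Rightarrow> complex \<times> complex \<Rightarrow> complex" where
  "pd S x u = vector_derivative (\<lambda>t::real. S (x + t *\<^sub>R u)) (at 0)"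

definition pd2 :: "(complex \<times> complex \<Rightarrow> complex) \<Rightarrow> complex \<times> complex \<Rightarrow> complex \<times> complex
                    \<Rightarrow> complex \<times> complex \<Rightarrow> complex" where
  "pd2 S x u v = vector_derivative (\<lambda>t::real. pd S (x + t *\<^sub>R u) v) (at 0)"

text \<open>real basis directions: ev k False = direction of Re w_k, ev k True = Im w_k (k = 1,2)\<close>
definition ev :: "nat \<Rightarrow> bool \<Rightarrow> complex \<times> complex" where
  "ev k im = (let c = (if im then \<i> else 1) in if k = 1 then (c, 0) else (0, c))"

text \<open>Second-order Wirtinger derivative: wirt2 S x k b l c is
  d/d(w_k or conj w_k) of d/d(w_l or conj w_l) of S, where the flag True means
  the conjugate variable. d/dw = (d_x - i d_y)/2, d/dconj w = (d_x + i d_y)/2.\<close>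
definition wirt2 :: "(complex \<times> complex \<Rightarrow> complex) \<Rightarrow> complex \<times> complex
                     \<Rightarrow> nat \<Rightarrow> bool \<Rightarrow> nat \<Rightarrow> bool \<Rightarrow> complex" where
  "wirt2 S x k b l c =
     (let sb = (if b then 1 else -1) :: complex; sc = (if c then 1 else -1) :: complex in
      (1/4) * (pd2 S x (ev k False) (ev l False)
               + sc * \<i> * pd2 S x (ev k False) (ev l True)
               + sb * \<i> * pd2 S x (ev k True) (ev l False)
               + sb * sc * \<i> * \<i> * pd2 S x (ev k True) (ev l True)))"

text \<open>Diffusion operator (generator) of the system dw = drift dt + sum_j g_j dY^j, with Y a
  standard 8-dimensional (real) Wiener process, w regarded as a point of R^4:
  D S = d_drift S + 1/2 sum_j d_{g_j} d_{g_j} S.\<close>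
definition diffusion_op :: "(complex \<times> complex \<Rightarrow> complex) \<Rightarrow> complex \<times> complex \<Rightarrow> complex" where
  "diffusion_op S w =
     pd S w (qf_drift (fst w) (snd w) 1, qf_drift (fst w) (snd w) 2)
     + (1/2) * (\<Sum>j<8. pd2 S w (qf_diff (fst w) (snd w) 1 j, qf_diff (fst w) (snd w) 2 j)
                                (qf_diff (fst w) (snd w) 1 j, qf_diff (fst w) (snd w) 2 j))"

definition laplace_pro :: "(complex \<times> complex \<Rightarrow> complex) \<Rightarrow> complex \<times> complex \<Rightarrow> complex" where
  "laplace_pro S w =
     (let w1 = fst w; w2 = snd w in
      (1 + (cmod w1)^2 + (cmod w2)^2) *
        ((1 + (cmod w1)^2) * wirt2 S w 1 False 1 True
         + (1 + (cmod w2)^2) * wirt2 S w 2 False 2 True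
         + w1 * cnj w2 * wirt2 S w 1 False 2 True
         + cnj w1 * w2 * wirt2 S w 1 True 2 False))"

end

theory Submission imports Defs begin


lemma sum3: "(\<Sum>m<3. f m) = f 0 + f 1 + ((f::nat\<Rightarrow>complex) 2)"
  by (simp add: eval_nat_numeral)
lemma sum8: "(\<Sum>m<8. f m) = f 0 + f 1 + f 2 + f 3 + f 4 + f 5 + f 6 + ((f::nat\<Rightarrow>complex) 7)"
  by (simp add: eval_nat_numeral)
lemma upt8: "[0..<8] = [0,1,2,3,4,5,6,7::nat]" by (simp add: eval_nat_numeral upt_rec)

lemma mv: "mvec A v 0 = A 0 0 * v 0 + A 0 1 * v 1 + A 0 2 * v 2"
  "mvec A v 1 = A 1 0 * v 0 + A 1 1 * v 1 + A 1 2 * v 2"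
  "mvec A v 2 = A 2 0 * v 0 + A 2 1 * v 1 + A 2 2 * v 2"
  by (simp_all add: mvec_def sum3)

lemma mvmul: "mvec (mmul A B) v = mvec A (mvec B v)"
  by (rule ext) (simp add: mvec_def mmul_def sum3 algebra_simps)

lemma madj_simp: "madj A a b = cnj (A b a)" by (simp add: madj_def)

lemma W: "Wv w1 w2 0 = 1" "Wv w1 w2 1 = w1" "Wv w1 w2 2 = w2"
  by (simp_all add: Wv_def)

lemma gm_simps: "gm 0 = gm_s 0 1" "gm 1 = gm_s 0 2" "gm 2 = gm_s 1 2" "gm 3 = gm_a 0 1"
  "gm 4 = gm_a 0 2" "gm 5 = gm_a 1 2" "gm 6 = gm_d1" "gm 7 = gm_d2"
  by (simp_all add: gm_def eval_nat_numeral)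

lemma s3: "complex_of_real (sqrt 3) * complex_of_real (sqrt 3) = 3"
  by (simp flip: of_real_mult)
lemma s3': "complex_of_real (sqrt 3) * (complex_of_real (sqrt 3) * x) = 3 * x"
  by (simp add: s3 flip: mult.assoc)
lemma s3nz: "complex_of_real (sqrt 3) \<noteq> 0" by simp
lemma s3d: "x / complex_of_real (sqrt 3) = x * complex_of_real (sqrt 3) / 3"
  using s3nz by (simp add: field_simps s3)

lemmas E = mv W gm_simps gm_s_def gm_a_def gm_d1_def gm_d2_def madj_simp mvmul

lemma diff1: "map (qf_diff w1 w2 1) [0..<8] =
          [1 - w1^2, - w1 * w2, w2, \<i> * (1 + w1^2), \<i> * w1 * w2, - \<i> * w2, - 2 * w1, 0]"
  unfolding upt8 list.map qf_diff_def Let_def mv W gm_simps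
  by (simp add: gm_s_def gm_a_def gm_d1_def gm_d2_def s3d s3 s3' algebra_simps power2_eq_square)

lemma diff2: "map (qf_diff w1 w2 2) [0..<8] =
          [- w1 * w2, 1 - w2^2, w1, \<i> * w1 * w2, \<i> * (1 + w2^2), \<i> * w1, - w2,
           - complex_of_real (sqrt 3) * w2]"
  unfolding upt8 list.map qf_diff_def Let_def mv W gm_simps
  by (simp add: gm_s_def gm_a_def gm_d1_def gm_d2_def s3d s3 s3' algebra_simps power2_eq_square)

lemmas G = gm_s_def gm_a_def gm_d1_def gm_d2_def

lemma drift: "qf_drift w1 w2 1 = 0 \<and> qf_drift w1 w2 2 = 0"
  unfolding qf_drift_def Let_def sum8 mvmul mv madj_simp W gm_simps
  by (simp add: G s3d s3 s3' algebra_simps power2_eq_square)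

lemma innov_aux: "(\<Sum>j<8. qf_diff w1 w2 1 j * cinner3 (Wv w1 w2) (mvec (gm j) (Wv w1 w2))) = 0"
   "(\<Sum>j<8. qf_diff w1 w2 2 j * cinner3 (Wv w1 w2) (mvec (gm j) (Wv w1 w2))) = 0"
  unfolding qf_diff_def cinner3_def sum3 Let_def sum8 mv W gm_simps
  by (simp_all add: G s3d s3 s3' algebra_simps power2_eq_square)

lemma nz: "cinner3 (Wv w1 w2) (Wv w1 w2) \<noteq> 0"
proof
  assume "cinner3 (Wv w1 w2) (Wv w1 w2) = 0"
  then have "Re (cinner3 (Wv w1 w2) (Wv w1 w2)) = 0" by simp
  moreover have "Re (cinner3 (Wv w1 w2) (Wv w1 w2)) = 1 + (cmod w1)^2 + (cmod w2)^2"
    unfolding cinner3_def sum3 W by (simp add: cmod_power2 flip: power2_eq_square)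
  moreover have "1 + (cmod w1)^2 + (cmod w2)^2 > 0" by (simp add: add_pos_nonneg)
  ultimately show False by simp
qed

lemma innov: "qf_innov_drift w1 w2 1 = 0 \<and> qf_innov_drift w1 w2 2 = 0"
proof -
  have "(\<Sum>j<8. qf_diff w1 w2 k j * (2 * expect (gm j) (Wv w1 w2)))
      = (\<Sum>j<8. qf_diff w1 w2 k j * cinner3 (Wv w1 w2) (mvec (gm j) (Wv w1 w2))) * (2 / cinner3 (Wv w1 w2) (Wv w1 w2))" for k
    unfolding sum_distrib_right expect_def by (rule sum.cong) auto
  then show ?thesis unfolding qf_innov_drift_def using drift innov_aux by simp
qed


lemma qd:
  "qf_diff w1 w2 1 0 = 1 - w1^2" "qf_diff w1 w2 1 1 = - w1 * w2" "qf_diff w1 w2 1 2 = w2"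
  "qf_diff w1 w2 1 3 = \<i> * (1 + w1^2)" "qf_diff w1 w2 1 4 = \<i> * w1 * w2"
  "qf_diff w1 w2 1 5 = - \<i> * w2" "qf_diff w1 w2 1 6 = - 2 * w1" "qf_diff w1 w2 1 7 = 0"
  "qf_diff w1 w2 2 0 = - w1 * w2" "qf_diff w1 w2 2 1 = 1 - w2^2" "qf_diff w1 w2 2 2 = w1"
  "qf_diff w1 w2 2 3 = \<i> * w1 * w2" "qf_diff w1 w2 2 4 = \<i> * (1 + w2^2)"
  "qf_diff w1 w2 2 5 = \<i> * w1" "qf_diff w1 w2 2 6 = - w2"
  "qf_diff w1 w2 2 7 = - complex_of_real (sqrt 3) * w2"
  unfolding qf_diff_def Let_def mv W gm_simps
  by (simp_all add: G s3d s3 s3' algebra_simps power2_eq_square)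


lemma cmod_sq: "(complex_of_real (cmod z))^2 = z * cnj z"
  using complex_norm_square[of z] by (simp only: of_real_power)


lemma dist_add_le: "dist x (y + w) \<le> dist x y + norm (w::'a::real_normed_vector)"
proof -
  have "dist x (y + w) = norm ((x - y) - w)" by (simp add: dist_norm algebra_simps)
  also have "\<dots> \<le> norm (x - y) + norm w" by (rule norm_triangle_ineq4)
  finally show ?thesis by (simp add: dist_norm)
qed

lemma half:
  fixes S :: "'a::real_normed_vector \<Rightarrow> 'b::real_normed_vector"
  assumes d1: "\<And>y. y \<in> ball x \<delta> \<Longrightarrow> (S has_derivative blinfun_apply (S' y)) (at y)"
    and d2: "\<And>y. y \<in> ball x \<delta> \<Longrightarrow> (S' has_derivative blinfun_apply (S'' y)) (at y)"
    and bnd: "\<And>y. y \<in> ball x \<delta> \<Longrightarrow> norm (S'' y - S'' x) \<le> \<epsilon>"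
    and s: "s > 0" and sd: "s * (norm u + norm v) < \<delta>/2"
  shows "norm (S (x + s *\<^sub>R u + s *\<^sub>R v) - S (x + s *\<^sub>R u) - S (x + s *\<^sub>R v) + S x
            - (s * s) *\<^sub>R S'' x v u) \<le> s * s * norm u * norm v * \<epsilon>"
proof -
  have "s * norm u + s * norm v < \<delta>/2" using sd by (simp add: distrib_left)
  moreover have "s * norm u \<ge> 0" "s * norm v \<ge> 0" using s by simp_all
  ultimately have nu: "s * norm u < \<delta>/2" and nv: "s * norm v < \<delta>/2" by linarith+
  have dpos: "\<delta> > 0" using nu \<open>s * norm u \<ge> 0\<close> by linarith
  define L where "L = S'' x (s *\<^sub>R v)"
  define \<phi> where "\<phi> y = S (y + s *\<^sub>R v) - S y - L y" for y
  define C where "C = ball x (\<delta>/2)"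
  have key: "norm (S' (y + s *\<^sub>R v) - S' y - L) \<le> s * norm v * \<epsilon>" if y: "y \<in> C" for y
  proof -
    have "norm (S' (y + s *\<^sub>R v) - S' y - S'' x ((y + s *\<^sub>R v) - y)) \<le> norm ((y + s *\<^sub>R v) - y) * \<epsilon>"
    proof (rule differentiable_bound_linearization[where S="ball x \<delta>" and f'="\<lambda>z. blinfun_apply (S'' z)"])
      fix t :: real assume t: "t \<in> {0..1}"
      have "dist x (y + t *\<^sub>R (y + s *\<^sub>R v - y)) \<le> dist x y + norm (t *\<^sub>R s *\<^sub>R v)"
        using dist_add_le[of x y "t *\<^sub>R s *\<^sub>R v"] by simp
      also have "norm (t *\<^sub>R s *\<^sub>R v) \<le> s * norm v" using t s
        by (simp add: mult_left_le_one_le)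
      finally show "y + t *\<^sub>R (y + s *\<^sub>R v - y) \<in> ball x \<delta>"
        using y nv unfolding C_def by simp
    next
      fix z assume "z \<in> ball x \<delta>"
      then show "(S' has_derivative blinfun_apply (S'' z)) (at z within ball x \<delta>)"
        using d2 has_derivative_at_withinI by blast
    next
      fix z assume z: "z \<in> ball x \<delta>"
      have "blinfun_apply (S'' z) - blinfun_apply (S'' x) = blinfun_apply (S'' z - S'' x)"
        by (simp add: fun_eq_iff blinfun.diff_left)
      then show "onorm (blinfun_apply (S'' z) - blinfun_apply (S'' x)) \<le> \<epsilon>"
        using bnd[OF z] by (simp add: norm_blinfun.rep_eq)
    next
      show "x \<in> ball x \<delta>" using dpos by simp
    qed
    then show ?thesis using s by (simp add: L_def mult.commute mult.left_commute)
  qed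
  have dphi: "(\<phi> has_derivative blinfun_apply (S' (y + s *\<^sub>R v) - S' y - L)) (at y within C)"
    if y: "y \<in> C" for y
  proof -
    have dy: "dist x y < \<delta>/2" using y unfolding C_def by simp
    have "norm (s *\<^sub>R v) = s * norm v" using s by simp
    then have yb: "y \<in> ball x \<delta>" "y + s *\<^sub>R v \<in> ball x \<delta>"
      using dy nv dist_add_le[of x y "s *\<^sub>R v"] dpos by auto
    have a: "((\<lambda>y. S (y + s *\<^sub>R v)) has_derivative blinfun_apply (S' (y + s *\<^sub>R v))) (at y)"
      using diff_chain_at[OF has_derivative_add_const[OF has_derivative_ident] d1[OF yb(2)]]
      by (simp add: o_def)
    have b: "(S has_derivative blinfun_apply (S' y)) (at y)" using d1[OF yb(1)] .
    have c: "(blinfun_apply L has_derivative blinfun_apply L) (at y)"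
      by (rule bounded_linear_imp_has_derivative) (rule blinfun.bounded_linear_right)
    have "(\<phi> has_derivative (\<lambda>h. S' (y + s *\<^sub>R v) h - S' y h - L h)) (at y)"
      unfolding \<phi>_def by (intro has_derivative_diff a b c)
    moreover have "blinfun_apply (S' (y + s *\<^sub>R v) - S' y - L) = (\<lambda>h. S' (y + s *\<^sub>R v) h - S' y h - L h)"
      by (simp add: fun_eq_iff blinfun.diff_left)
    ultimately show ?thesis
      by (simp add: has_derivative_at_withinI)
  qed
  have "norm (\<phi> (x + s *\<^sub>R u) - \<phi> x) \<le> (s * norm v * \<epsilon>) * norm ((x + s *\<^sub>R u) - x)"
  proof (rule differentiable_bound[where S=C])
    show "convex C" unfolding C_def by simp
    show "(\<phi> has_derivative blinfun_apply (S' (y + s *\<^sub>R v) - S' y - L)) (at y within C)"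
      if "y \<in> C" for y using dphi that .
    show "onorm (blinfun_apply (S' (y + s *\<^sub>R v) - S' y - L)) \<le> s * norm v * \<epsilon>"
      if "y \<in> C" for y using key[OF that] by (simp add: norm_blinfun.rep_eq)
    show "x + s *\<^sub>R u \<in> C" using nu s unfolding C_def by (simp add: dist_norm)
    show "x \<in> C" unfolding C_def using nu s
      using dpos by simp
  qed
  moreover have "\<phi> (x + s *\<^sub>R u) - \<phi> x = S (x + s *\<^sub>R u + s *\<^sub>R v) - S (x + s *\<^sub>R u) - S (x + s *\<^sub>R v) + S x
            - (s * s) *\<^sub>R S'' x v u"
    unfolding \<phi>_def L_def
    by (simp add: blinfun.add_right blinfun.scaleR_right blinfun.scaleR_left algebra_simps)
  ultimately show ?thesis using s by (simp add: algebra_simps)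
qed

lemma sym2:
  fixes S :: "'a::real_normed_vector \<Rightarrow> 'b::real_normed_vector"
  assumes U: "open U" and d1: "\<forall>x\<in>U. (S has_derivative blinfun_apply (S' x)) (at x)"
    and d2: "\<forall>x\<in>U. (S' has_derivative blinfun_apply (S'' x)) (at x)"
    and c: "continuous_on U S''" and x: "x \<in> U"
  shows "S'' x u v = S'' x v u"
proof (rule ccontr)
  assume ne: "S'' x u v \<noteq> S'' x v u"
  define d where "d = norm (S'' x u v - S'' x v u)"
  have dpos: "d > 0" using ne unfolding d_def by simp
  define \<epsilon> where "\<epsilon> = d / (4 * (norm u * norm v + 1))"
  have pp: "norm u * norm v + 1 > 0" by (simp add: add_nonneg_pos)
  have epos: "\<epsilon> > 0" unfolding \<epsilon>_def using dpos pp by simp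
  obtain \<delta>1 where d1pos: "\<delta>1 > 0" and d1c: "\<forall>x'\<in>U. dist x' x < \<delta>1 \<longrightarrow> dist (S'' x') (S'' x) < \<epsilon>"
    using c x epos unfolding continuous_on_iff by blast
  obtain \<delta>2 where d2pos: "\<delta>2 > 0" and d2b: "ball x \<delta>2 \<subseteq> U"
    using U x open_contains_ball by blast
  define \<delta> where "\<delta> = min \<delta>1 \<delta>2"
  have dpos': "\<delta> > 0" using d1pos d2pos unfolding \<delta>_def by simp
  have sub: "y \<in> U" if "y \<in> ball x \<delta>" for y using that d2b unfolding \<delta>_def by auto
  have bnd: "norm (S'' y - S'' x) \<le> \<epsilon>" if y: "y \<in> ball x \<delta>" for y
  proof -
    have "dist y x < \<delta>1" using y unfolding \<delta>_def by (simp add: dist_commute)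
    then have "dist (S'' y) (S'' x) < \<epsilon>" using d1c sub[OF y] by blast
    then show ?thesis by (simp add: dist_norm)
  qed
  define N where "N = norm u + norm v + 1"
  define s where "s = \<delta> / (4 * N)"
  have qq: "N > 0" unfolding N_def by (simp add: add_nonneg_pos)
  have spos: "s > 0" unfolding s_def using dpos' qq by simp
  have "s * (norm u + norm v) < s * N" using spos unfolding N_def by simp
  also have "\<dots> = \<delta> / 4" unfolding s_def using qq by simp
  also have "\<dots> < \<delta> / 2" using dpos' by simp
  finally have sd: "s * (norm u + norm v) < \<delta> / 2" .
  then have sd': "s * (norm v + norm u) < \<delta> / 2" by (simp add: add.commute)
  have dd1: "\<And>y. y \<in> ball x \<delta> \<Longrightarrow> (S has_derivative blinfun_apply (S' y)) (at y)"
    using d1 sub by blast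
  have dd2: "\<And>y. y \<in> ball x \<delta> \<Longrightarrow> (S' has_derivative blinfun_apply (S'' y)) (at y)"
    using d2 sub by blast
  note h1 = half[OF dd1 dd2 bnd spos sd]
  note h2 = half[OF dd1 dd2 bnd spos sd']
  define A where "A = S (x + s *\<^sub>R u + s *\<^sub>R v) - S (x + s *\<^sub>R u) - S (x + s *\<^sub>R v) + S x"
  have A2: "S (x + s *\<^sub>R v + s *\<^sub>R u) - S (x + s *\<^sub>R v) - S (x + s *\<^sub>R u) + S x = A"
    unfolding A_def by (simp add: add_ac diff_add_eq algebra_simps)
  have n1: "norm (A - (s * s) *\<^sub>R S'' x v u) \<le> s * s * norm u * norm v * \<epsilon>"
    using h1 unfolding A_def .
  have n2: "norm (A - (s * s) *\<^sub>R S'' x u v) \<le> s * s * norm u * norm v * \<epsilon>"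
    using h2 unfolding A2 by (simp add: mult.commute mult.left_commute)
  have "(s * s) *\<^sub>R (S'' x u v - S'' x v u) = (A - (s * s) *\<^sub>R S'' x v u) - (A - (s * s) *\<^sub>R S'' x u v)"
    by (simp add: algebra_simps)
  then have "norm ((s * s) *\<^sub>R (S'' x u v - S'' x v u)) \<le> norm (A - (s * s) *\<^sub>R S'' x v u) + norm (A - (s * s) *\<^sub>R S'' x u v)"
    by (metis norm_triangle_ineq4)
  also have "\<dots> \<le> (s * s) * (2 * norm u * norm v * \<epsilon>)" using n1 n2 by (simp add: algebra_simps)
  finally have "(s * s) * d \<le> (s * s) * (2 * norm u * norm v * \<epsilon>)"
    unfolding d_def using spos by simp
  then have le: "d \<le> 2 * norm u * norm v * \<epsilon>" using spos by simp
  have "2 * norm u * norm v * \<epsilon> = d * (2 * (norm u * norm v)) / (4 * (norm u * norm v + 1))"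
    unfolding \<epsilon>_def by simp
  also have "\<dots> < d"
  proof -
    have "d * (2 * (norm u * norm v)) < d * (4 * (norm u * norm v + 1))"
      using dpos by (intro mult_strict_left_mono) (auto simp: add_nonneg_pos)
    then show ?thesis using pp by (simp add: divide_less_eq)
  qed
  finally show False using le by simp
qed



lemma pd_eq:
  assumes "(S has_derivative blinfun_apply (S' y)) (at y)"
  shows "pd S y v = S' y v"
proof -
  have l: "((\<lambda>t::real. y + t *\<^sub>R v) has_derivative (\<lambda>t. t *\<^sub>R v)) (at 0)"
    by (auto intro!: derivative_eq_intros)
  have "((S \<circ> (\<lambda>t::real. y + t *\<^sub>R v)) has_derivative (blinfun_apply (S' y) \<circ> (\<lambda>t. t *\<^sub>R v))) (at 0)"
    by (rule diff_chain_at[OF l]) (use assms in simp)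
  then have "((\<lambda>t::real. S (y + t *\<^sub>R v)) has_vector_derivative S' y v) (at 0)"
    unfolding has_vector_derivative_def by (simp add: o_def blinfun.scaleR_right)
  then show ?thesis unfolding pd_def by (rule vector_derivative_at)
qed

lemma pd2_eq:
  assumes U: "open U" and d1: "\<forall>x\<in>U. (S has_derivative blinfun_apply (S' x)) (at x)"
    and d2: "\<forall>x\<in>U. (S' has_derivative blinfun_apply (S'' x)) (at x)" and x: "x \<in> U"
  shows "pd2 S x u v = S'' x u v"
proof -
  define T where "T = (\<lambda>t::real. x + t *\<^sub>R u) -` U"
  have T: "open T" unfolding T_def
    by (rule continuous_open_vimage[OF U]) (auto intro!: continuous_intros)
  have T0: "0 \<in> T" unfolding T_def using x by simp
  have l: "((\<lambda>t::real. x + t *\<^sub>R u) has_derivative (\<lambda>t. t *\<^sub>R u)) (at 0)"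
    by (auto intro!: derivative_eq_intros)
  have "((S' \<circ> (\<lambda>t::real. x + t *\<^sub>R u)) has_derivative (blinfun_apply (S'' x) \<circ> (\<lambda>t. t *\<^sub>R u))) (at 0)"
    by (rule diff_chain_at[OF l]) (use d2 x in simp)
  then have "((\<lambda>t. blinfun_apply ((S' \<circ> (\<lambda>t::real. x + t *\<^sub>R u)) t) v) has_derivative
       (\<lambda>t. blinfun_apply ((blinfun_apply (S'' x) \<circ> (\<lambda>t. t *\<^sub>R u)) t) v)) (at 0)"
    by (rule bounded_linear.has_derivative[OF blinfun.bounded_linear_left])
  then have "((\<lambda>t::real. S' (x + t *\<^sub>R u) v) has_vector_derivative S'' x u v) (at 0)"
    unfolding has_vector_derivative_def by (simp add: o_def blinfun.scaleR_right blinfun.scaleR_left)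
  then have "((\<lambda>t::real. pd S (x + t *\<^sub>R u) v) has_vector_derivative S'' x u v) (at 0)"
  proof (rule has_vector_derivative_transform_within_open[OF _ T T0])
    fix t assume "t \<in> T"
    then have "x + t *\<^sub>R u \<in> U" unfolding T_def by simp
    then show "S' (x + t *\<^sub>R u) v = pd S (x + t *\<^sub>R u) v"
      using pd_eq d1 by metis
  qed
  then show ?thesis unfolding pd2_def by (rule vector_derivative_at)
qed



lemma dec: "((z1::complex), (z2::complex)) = Re z1 *\<^sub>R ev 1 False + Im z1 *\<^sub>R ev 1 True + Re z2 *\<^sub>R ev 2 False + Im z2 *\<^sub>R ev 2 True"
  by (simp add: ev_def complex_eq_iff scaleR_conv_of_real)

lemma re_c: "complex_of_real (Re z) = (z + cnj z) / 2"
  by (simp add: complex_add_cnj)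
lemma im_c: "complex_of_real (Im z) = - \<i> * (z - cnj z) / 2"
  by (simp add: complex_eq_iff)

lemma quad:
  fixes H :: "(complex \<times> complex) \<Rightarrow>\<^sub>L (complex \<times> complex) \<Rightarrow>\<^sub>L complex"
    and z1 z2 :: complex
  defines "X1 \<equiv> (z1 + cnj z1) / 2" and "Y1 \<equiv> - \<i> * (z1 - cnj z1) / 2"
    and "X2 \<equiv> (z2 + cnj z2) / 2" and "Y2 \<equiv> - \<i> * (z2 - cnj z2) / 2"
  shows "H (z1, z2) (z1, z2) =
     X1 * X1 * H (ev 1 False) (ev 1 False) + X1 * Y1 * H (ev 1 False) (ev 1 True)
   + X1 * X2 * H (ev 1 False) (ev 2 False) + X1 * Y2 * H (ev 1 False) (ev 2 True)
   + Y1 * X1 * H (ev 1 True) (ev 1 False) + Y1 * Y1 * H (ev 1 True) (ev 1 True)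
   + Y1 * X2 * H (ev 1 True) (ev 2 False) + Y1 * Y2 * H (ev 1 True) (ev 2 True)
   + X2 * X1 * H (ev 2 False) (ev 1 False) + X2 * Y1 * H (ev 2 False) (ev 1 True)
   + X2 * X2 * H (ev 2 False) (ev 2 False) + X2 * Y2 * H (ev 2 False) (ev 2 True)
   + Y2 * X1 * H (ev 2 True) (ev 1 False) + Y2 * Y1 * H (ev 2 True) (ev 1 True)
   + Y2 * X2 * H (ev 2 True) (ev 2 False) + Y2 * Y2 * H (ev 2 True) (ev 2 True)"
proof -
  have e: "complex_of_real (Re z1) = X1" "complex_of_real (Im z1) = Y1"
    "complex_of_real (Re z2) = X2" "complex_of_real (Im z2) = Y2"
    unfolding X1_def Y1_def X2_def Y2_def by (simp_all only: re_c im_c)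
  show ?thesis
    unfolding dec[of z1 z2]
    by (simp add: blinfun.add_left blinfun.add_right blinfun.scaleR_left blinfun.scaleR_right
      scaleR_conv_of_real e algebra_simps)
qed




definition wq :: "((complex \<times> complex) \<Rightarrow>\<^sub>L (complex \<times> complex) \<Rightarrow>\<^sub>L complex) \<Rightarrow> nat \<Rightarrow> nat \<Rightarrow> complex" where
  "wq H k l = (1/4) * (H (ev k False) (ev l False) + \<i> * H (ev k False) (ev l True)
      - \<i> * H (ev k True) (ev l False) + H (ev k True) (ev l True))"
definition wp :: "((complex \<times> complex) \<Rightarrow>\<^sub>L (complex \<times> complex) \<Rightarrow>\<^sub>L complex) \<Rightarrow> nat \<Rightarrow> nat \<Rightarrow> complex" where
  "wp H k l = (1/4) * (H (ev k False) (ev l False) - \<i> * H (ev k False) (ev l True)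
      - \<i> * H (ev k True) (ev l False) - H (ev k True) (ev l True))"
definition wr :: "((complex \<times> complex) \<Rightarrow>\<^sub>L (complex \<times> complex) \<Rightarrow>\<^sub>L complex) \<Rightarrow> nat \<Rightarrow> nat \<Rightarrow> complex" where
  "wr H k l = (1/4) * (H (ev k False) (ev l False) + \<i> * H (ev k False) (ev l True)
      + \<i> * H (ev k True) (ev l False) - H (ev k True) (ev l True))"

lemma quadC:
  fixes H :: "(complex \<times> complex) \<Rightarrow>\<^sub>L (complex \<times> complex) \<Rightarrow>\<^sub>L complex"
  assumes sym: "\<And>a b. H a b = H b a"
  shows "H (z1, z2) (z1, z2) =
    z1 * z1 * wp H 1 1 + z1 * z2 * (wp H 1 2 + wp H 2 1) + z2 * z2 * wp H 2 2
  + cnj z1 * cnj z1 * wr H 1 1 + cnj z1 * cnj z2 * (wr H 1 2 + wr H 2 1) + cnj z2 * cnj z2 * wr H 2 2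
  + 2 * (z1 * cnj z1 * wq H 1 1 + z1 * cnj z2 * wq H 1 2 + z2 * cnj z1 * wq H 2 1 + z2 * cnj z2 * wq H 2 2)"
proof -
  note syi = sym[of "ev 1 True" "ev 1 False"] sym[of "ev 2 False" "ev 1 False"]
    sym[of "ev 2 True" "ev 1 False"] sym[of "ev 2 False" "ev 1 True"]
    sym[of "ev 2 True" "ev 1 True"] sym[of "ev 2 True" "ev 2 False"]
  show ?thesis
    unfolding quad wq_def wp_def wr_def syi
    by (simp add: field_simps)
qed

lemma sumquad:
  fixes H :: "(complex \<times> complex) \<Rightarrow>\<^sub>L (complex \<times> complex) \<Rightarrow>\<^sub>L complex"
  assumes sym: "\<And>a b. H a b = H b a"
  shows "(\<Sum>j<8. H (a j, b j) (a j, b j)) =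
    (\<Sum>j<8. a j * a j) * wp H 1 1 + (\<Sum>j<8. a j * b j) * (wp H 1 2 + wp H 2 1) + (\<Sum>j<8. b j * b j) * wp H 2 2
  + (\<Sum>j<8. cnj (a j) * cnj (a j)) * wr H 1 1 + (\<Sum>j<8. cnj (a j) * cnj (b j)) * (wr H 1 2 + wr H 2 1)
  + (\<Sum>j<8. cnj (b j) * cnj (b j)) * wr H 2 2
  + 2 * ((\<Sum>j<8. a j * cnj (a j)) * wq H 1 1 + (\<Sum>j<8. a j * cnj (b j)) * wq H 1 2
       + (\<Sum>j<8. b j * cnj (a j)) * wq H 2 1 + (\<Sum>j<8. b j * cnj (b j)) * wq H 2 2)"
  unfolding quadC[OF sym] sum_distrib_right sum_distrib_left sum.distrib[symmetric]
  by (rule sum.cong) (simp_all add: algebra_simps)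

lemma cN: "(\<Sum>j<8. cnj (a j) * cnj (b j)) = cnj (\<Sum>j<8. a j * b j)"
  by simp

lemma NM:
  "(\<Sum>j<8. qf_diff w1 w2 1 j * qf_diff w1 w2 1 j) = 0"
  "(\<Sum>j<8. qf_diff w1 w2 1 j * qf_diff w1 w2 2 j) = 0"
  "(\<Sum>j<8. qf_diff w1 w2 2 j * qf_diff w1 w2 2 j) = 0"
  "(\<Sum>j<8. qf_diff w1 w2 1 j * cnj (qf_diff w1 w2 1 j)) = 2 * (1 + w1 * cnj w1 + w2 * cnj w2) * (1 + w1 * cnj w1)"
  "(\<Sum>j<8. qf_diff w1 w2 1 j * cnj (qf_diff w1 w2 2 j)) = 2 * (1 + w1 * cnj w1 + w2 * cnj w2) * (w1 * cnj w2)"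
  "(\<Sum>j<8. qf_diff w1 w2 2 j * cnj (qf_diff w1 w2 1 j)) = 2 * (1 + w1 * cnj w1 + w2 * cnj w2) * (w2 * cnj w1)"
  "(\<Sum>j<8. qf_diff w1 w2 2 j * cnj (qf_diff w1 w2 2 j)) = 2 * (1 + w1 * cnj w1 + w2 * cnj w2) * (1 + w2 * cnj w2)"
  unfolding sum8 qd
  by (simp_all add: algebra_simps power2_eq_square s3 s3')

theorem proposition4p1:
  shows
   "(\<forall>w1 w2. qf_drift w1 w2 1 = 0 \<and> qf_drift w1 w2 2 = 0)
    \<and> (\<forall>w1 w2. map (qf_diff w1 w2 1) [0..<8] =
          [1 - w1^2, - w1 * w2, w2, \<i> * (1 + w1^2), \<i> * w1 * w2, - \<i> * w2, - 2 * w1, 0])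
    \<and> (\<forall>w1 w2. map (qf_diff w1 w2 2) [0..<8] =
          [- w1 * w2, 1 - w2^2, w1, \<i> * w1 * w2, \<i> * (1 + w2^2), \<i> * w1, - w2,
           - complex_of_real (sqrt 3) * w2])
    \<and> (\<forall>w1 w2. qf_innov_drift w1 w2 1 = 0 \<and> qf_innov_drift w1 w2 2 = 0)
    \<and> (\<forall>(S :: complex \<times> complex \<Rightarrow> complex)
         (S' :: complex \<times> complex \<Rightarrow> ((complex \<times> complex) \<Rightarrow>\<^sub>L complex))
         (S'' :: complex \<times> complex \<Rightarrow> ((complex \<times> complex) \<Rightarrow>\<^sub>L ((complex \<times> complex) \<Rightarrow>\<^sub>L complex)))
         U w.
         open U \<longrightarrow>
         (\<forall>x\<in>U. (S has_derivative blinfun_apply (S' x)) (at x)) \<longrightarrow>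
         (\<forall>x\<in>U. (S' has_derivative blinfun_apply (S'' x)) (at x)) \<longrightarrow>
         continuous_on U S'' \<longrightarrow>
         w \<in> U \<longrightarrow>
         diffusion_op S w = 2 * laplace_pro S w)"
proof (intro conjI allI impI)
  fix w1 w2
  show "qf_drift w1 w2 1 = 0" "qf_drift w1 w2 2 = 0" using drift by auto
  show "map (qf_diff w1 w2 1) [0..<8] =
          [1 - w1^2, - w1 * w2, w2, \<i> * (1 + w1^2), \<i> * w1 * w2, - \<i> * w2, - 2 * w1, 0]"
    by (rule diff1)
  show "map (qf_diff w1 w2 2) [0..<8] =
          [- w1 * w2, 1 - w2^2, w1, \<i> * w1 * w2, \<i> * (1 + w2^2), \<i> * w1, - w2,
           - complex_of_real (sqrt 3) * w2]"
    by (rule diff2)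
  show "qf_innov_drift w1 w2 1 = 0" "qf_innov_drift w1 w2 2 = 0" using innov by auto
next
  fix S :: "complex \<times> complex \<Rightarrow> complex"
    and S' :: "complex \<times> complex \<Rightarrow> ((complex \<times> complex) \<Rightarrow>\<^sub>L complex)"
    and S'' :: "complex \<times> complex \<Rightarrow> ((complex \<times> complex) \<Rightarrow>\<^sub>L ((complex \<times> complex) \<Rightarrow>\<^sub>L complex))"
    and U w
  assume U: "open U" and d1: "\<forall>x\<in>U. (S has_derivative blinfun_apply (S' x)) (at x)"
    and d2: "\<forall>x\<in>U. (S' has_derivative blinfun_apply (S'' x)) (at x)"
    and c: "continuous_on U S''" and w: "w \<in> U"
  obtain w1 w2 where ww: "w = (w1, w2)" by (cases w)
  have P: "pd2 S w a b = S'' w a b" for a b using pd2_eq[OF U d1 d2 w] .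
  have sy: "\<And>a b. S'' w a b = S'' w b a" using sym2[OF U d1 d2 c w] .
  have pd0: "pd S w (qf_drift w1 w2 1, qf_drift w1 w2 2) = 0"
    using drift pd_eq[of S S' w] d1 w by (simp add: blinfun.zero_right flip: zero_prod_def)
  have D: "diffusion_op S w = (1/2) * (\<Sum>j<8. S'' w (qf_diff w1 w2 1 j, qf_diff w1 w2 2 j)
                (qf_diff w1 w2 1 j, qf_diff w1 w2 2 j))"
    unfolding diffusion_op_def using pd0 P by (simp add: ww)
  have D2: "diffusion_op S w = (1 + w1 * cnj w1 + w2 * cnj w2) * 2 *
     ((1 + w1 * cnj w1) * wq (S'' w) 1 1 + (w1 * cnj w2) * wq (S'' w) 1 2
      + (w2 * cnj w1) * wq (S'' w) 2 1 + (1 + w2 * cnj w2) * wq (S'' w) 2 2)"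
    unfolding D sumquad[OF sy] NM cN by (simp add: algebra_simps)
  have wz: "wirt2 S w k False l True = wq (S'' w) k l" for k l
    unfolding wirt2_def wq_def Let_def P by (simp add: algebra_simps)
  have wz2: "wirt2 S w 1 True 2 False = wq (S'' w) 2 1"
    unfolding wirt2_def wq_def Let_def P
    using sy[of "ev 2 False" "ev 1 False"] sy[of "ev 2 True" "ev 1 False"]
      sy[of "ev 2 False" "ev 1 True"] sy[of "ev 2 True" "ev 1 True"]
    by (simp add: algebra_simps)
  show "diffusion_op S w = 2 * laplace_pro S w"
    unfolding D2 laplace_pro_def Let_def wz wz2
    by (simp add: ww cmod_sq algebra_simps)
qed

end
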